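(* Let $A$ be a deterministic parity tree automaton and $p$ a productive state of $A$. Then there exist a state $q$, a path $\pi_p$ from $p$ to $q$, and two branching paths $\pi_q^0,\pi_q^1$, each leading from $q$ to $q$, such that both $\pi_q^0$ and $\pi_q^1$ are accepting loops.
   Context: Deterministic parity tree automata: total $\delta:Q\times\Sigma\to Q\times Q$, edges $p\xrightarrow{\sigma,d}q$ with direction $d\in\{0,1\}$. A run is accepting if on every path the highest rank occurring infinitely often is even. A state is productive if it occurs in some accepting run (of the automaton from its initial state). A loop is a path returning to its starting state; it is accepting iff the maximal rank on it is even. Two paths from a common state are branching iff they agree on an initial segment of (letter, direction) pairs and then take the same letter in different directions. *)

theory Defs
  imports Main
begin

text \<open>Deterministic parity tree automata over finite state type 'q and finite alphabet 'a:
  transition delta :: 'q => 'a => 'q * 'q (total), ranks on states, initial state.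
  Direction False = 0 (left, fst), True = 1 (right, snd).
  Infinite binary trees: 'a-labelled functions on nodes bool list.\<close>

definition dir :: "bool \<Rightarrow> 'q \<times> 'q \<Rightarrow> 'q" where
  "dir d pq = (if d then snd pq else fst pq)"

fun run :: "('q \<Rightarrow> 'a \<Rightarrow> 'q \<times> 'q) \<Rightarrow> 'q \<Rightarrow> (bool list \<Rightarrow> 'a) \<Rightarrow> bool list \<Rightarrow> 'q" where
  "run delta p t [] = p"
| "run delta p t (d # u) = run delta (dir d (delta p (t []))) (\<lambda>v. t (d # v)) u"

definition parity_ok :: "(nat \<Rightarrow> nat) \<Rightarrow> bool" where
  "parity_ok f = even (Max {r. \<exists>\<^sub>\<infinity>n. f n = r})"

definition accepting_run :: "('q \<Rightarrow> nat) \<Rightarrow> (bool list \<Rightarrow> 'q) \<Rightarrow> bool" where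
  "accepting_run rank \<rho> = (\<forall>\<beta> :: nat \<Rightarrow> bool. parity_ok (\<lambda>n. rank (\<rho> (map \<beta> [0..<n]))))"

definition productive ::
  "('q \<Rightarrow> 'a \<Rightarrow> 'q \<times> 'q) \<Rightarrow> ('q \<Rightarrow> nat) \<Rightarrow> 'q \<Rightarrow> 'q \<Rightarrow> bool" where
  "productive delta rank init p =
     (\<exists>t. accepting_run rank (run delta init t) \<and> (\<exists>u. run delta init t u = p))"

text \<open>Finite paths from a state: lists of (letter, direction) pairs; pstates lists the visited states.\<close>
fun pstates :: "('q \<Rightarrow> 'a \<Rightarrow> 'q \<times> 'q) \<Rightarrow> 'q \<Rightarrow> ('a \<times> bool) list \<Rightarrow> 'q list" where
  "pstates delta p [] = [p]"
| "pstates delta p ((a, d) # w) = p # pstates delta (dir d (delta p a)) w"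

definition target :: "('q \<Rightarrow> 'a \<Rightarrow> 'q \<times> 'q) \<Rightarrow> 'q \<Rightarrow> ('a \<times> bool) list \<Rightarrow> 'q" where
  "target delta p w = last (pstates delta p w)"

definition is_loop :: "('q \<Rightarrow> 'a \<Rightarrow> 'q \<times> 'q) \<Rightarrow> 'q \<Rightarrow> ('a \<times> bool) list \<Rightarrow> bool" where
  "is_loop delta q w = (w \<noteq> [] \<and> target delta q w = q)"

definition accepting_loop ::
  "('q \<Rightarrow> 'a \<Rightarrow> 'q \<times> 'q) \<Rightarrow> ('q \<Rightarrow> nat) \<Rightarrow> 'q \<Rightarrow> ('a \<times> bool) list \<Rightarrow> bool" where
  "accepting_loop delta rank q w =
     (is_loop delta q w \<and> even (Max (rank ` set (pstates delta q w))))"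

definition branching :: "('a \<times> bool) list \<Rightarrow> ('a \<times> bool) list \<Rightarrow> bool" where
  "branching w0 w1 = (\<exists>u a d v0 v1. w0 = u @ (a, d) # v0 \<and> w1 = u @ (a, \<not> d) # v1)"

end

theory Submission
  imports Defs "HOL-Library.Infinite_Set"
begin

fun wd :: "(bool list \<Rightarrow> 'a) \<Rightarrow> bool list \<Rightarrow> bool list \<Rightarrow> ('a \<times> bool) list" where
  "wd t v [] = []"
| "wd t v (d # w) = (t v, d) # wd t (v @ [d]) w"

lemma run_snoc: "run delta p t (v @ [d]) = dir d (delta (run delta p t v) (t v))"
  by (induction v arbitrary: p t) auto

lemma wd_pstates:
  assumes "\<And>v d. rho (v@[d]) = dir d (delta (rho v) (t v))"
  shows "pstates delta (rho v) (wd t v w) = map (\<lambda>i. rho (v @ take i w)) [0..<Suc (length w)]"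
proof (induction w arbitrary: v)
  case Nil then show ?case by simp
next
  case (Cons d w)
  show ?case using Cons[of "v@[d]"] assms[of v d] by (simp add: map_upt_Suc del: upt_Suc)
qed

lemma wd_target:
  assumes "\<And>v d. rho (v@[d]) = dir d (delta (rho v) (t v))"
  shows "target delta (rho v) (wd t v w) = rho (v @ w)"
  unfolding target_def wd_pstates[of rho delta t, OF assms] by simp

lemma wd_set:
  assumes "\<And>v d. rho (v@[d]) = dir d (delta (rho v) (t v))"
  shows "set (pstates delta (rho v) (wd t v w)) \<subseteq> {rho (v @ w') | w'. True}"
    and "rho v \<in> set (pstates delta (rho v) (wd t v w))"
  unfolding wd_pstates[of rho delta t, OF assms] by (auto simp del: upt_Suc simp add: map_upt_Suc) (metis append_Nil2)

definition Reach :: "(bool list \<Rightarrow> 'q) \<Rightarrow> bool list \<Rightarrow> 'q set" where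
  "Reach rho v = {rho (v @ w) | w. True}"

definition nxt :: "(bool list \<Rightarrow> 'q) \<Rightarrow> 'q \<Rightarrow> bool list \<Rightarrow> bool list" where
  "nxt rho q y = y @ False # (SOME w. rho (y @ False # w) = q)"

theorem lemma12p1:
  fixes delta :: "'q::finite \<Rightarrow> 'a::finite \<Rightarrow> 'q \<times> 'q"
    and rank :: "'q \<Rightarrow> nat" and init :: 'q and p :: 'q
  assumes "productive delta rank init p"
  shows "\<exists>q pi_p pi0 pi1. target delta p pi_p = q \<and> branching pi0 pi1 \<and>
           accepting_loop delta rank q pi0 \<and> accepting_loop delta rank q pi1"
proof -
  obtain t u where acc: "accepting_run rank (run delta init t)" and pu: "run delta init t u = p"
    using assms unfolding productive_def by blast
  define rho where "rho = run delta init t"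
  have step: "\<And>v d. rho (v@[d]) = dir d (delta (rho v) (t v))"
    unfolding rho_def by (rule run_snoc)
  define n where "n = (LEAST k. \<exists>v. card (Reach rho (u@v)) = k)"
  have "\<exists>v. card (Reach rho (u@v)) = n"
    unfolding n_def by (rule LeastI_ex) blast
  then obtain v where v: "card (Reach rho (u@v)) = n" by blast
  define x where "x = u @ v"
  have nmin: "\<And>v'. n \<le> card (Reach rho (u@v'))"
    unfolding n_def by (rule Least_le) blast
  define R where "R = Reach rho x"
  have Rall: "Reach rho (x @ w) = R" for w
  proof -
    have sub: "Reach rho (x @ w) \<subseteq> R" unfolding R_def Reach_def by auto
    have "card R \<le> card (Reach rho (x @ w))"
      using nmin[of "v @ w"] v unfolding R_def x_def by simp
    thus ?thesis using sub card_seteq[OF finite] by blast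
  qed
  have reach: "s \<in> R \<Longrightarrow> \<exists>w'. rho (x @ w @ w') = s" for s w
    using Rall[of w] unfolding Reach_def by auto
  have Rne: "rho x \<in> R" unfolding R_def Reach_def by (auto intro: exI[of _ "[]"])
  define m where "m = Max (rank ` R)"
  have finR: "finite (rank ` R)" by simp
  have "m \<in> rank ` R" unfolding m_def using finR Rne by (intro Max_in) auto
  then obtain q where qR: "q \<in> R" and rq: "rank q = m" by blast
  have leM: "s \<in> R \<Longrightarrow> rank s \<le> m" for s unfolding m_def using finR by simp
  have evm: "even m"
  proof (rule ccontr)
    assume odd: "\<not> even m"
    define f where "f k = (nxt rho q ^^ k) x" for k
    have f0: "f 0 = x" and fS: "f (Suc k) = nxt rho q (f k)" for k unfolding f_def by simp_all
    have fx: "\<exists>w. f k = x @ w" for k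
    proof (induction k)
      case 0 then show ?case using f0 by (auto intro: exI[of _ "[]"])
    next
      case (Suc k) then obtain w where "f k = x @ w" by blast
      then show ?case unfolding fS nxt_def by auto
    qed
    have fq: "rho (f (Suc k)) = q" for k
    proof -
      obtain w where w: "f k = x @ w" using fx by blast
      have "\<exists>w'. rho (f k @ False # w') = q" using reach[OF qR, of "w @ [False]"] w by simp
      then show ?thesis unfolding fS nxt_def by (rule someI_ex)
    qed
    have flen: "length (f k) \<ge> k + length x" for k
      by (induction k) (auto simp: f0 fS nxt_def)
    have fpre: "k \<le> k' \<Longrightarrow> \<exists>w. f k' = f k @ w" for k k'
    proof (induction k' rule: dec_induct)
      case base then show ?case by (auto intro: exI[of _ "[]"])
    next
      case (step k') then show ?case by (auto simp: fS nxt_def)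
    qed
    define \<beta> where "\<beta> i = f (Suc i) ! i" for i
    have mapb: "map \<beta> [0..<N] = take N (f k)" if "N \<le> length (f k)" for N k
    proof (rule nth_equalityI)
      show "length (map \<beta> [0..<N]) = length (take N (f k))" using that by simp
    next
      fix i assume "i < length (map \<beta> [0..<N])"
      hence i: "i < N" by simp
      have "f (Suc i) ! i = f k ! i"
      proof (cases "Suc i \<le> k")
        case True
        then obtain w where "f k = f (Suc i) @ w" using fpre by blast
        moreover have "i < length (f (Suc i))" using flen[of "Suc i"] by simp
        ultimately show ?thesis by (simp add: nth_append)
      next
        case False
        then obtain w where "f (Suc i) = f k @ w" using fpre[of k "Suc i"] by auto
        moreover have "i < length (f k)" using i that by simp
        ultimately show ?thesis by (simp add: nth_append)
      qed
      then show "map \<beta> [0..<N] ! i = take N (f k) ! i" using i by (simp add: \<beta>_def)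
    qed
    define g where "g N = rank (rho (map \<beta> [0..<N]))" for N
    have po: "parity_ok g" using acc unfolding accepting_run_def g_def rho_def by blast
    define S where "S = {r. \<exists>\<^sub>\<infinity>N. g N = r}"
    have mS: "m \<in> S" unfolding S_def INFM_nat mem_Collect_eq
    proof (intro allI)
      fix N
      have "g (length (f (Suc N))) = m"
        unfolding g_def using mapb[of "length (f (Suc N))" "Suc N"] fq rq by simp
      moreover have "length (f (Suc N)) > N" using flen[of "Suc N"] by simp
      ultimately show "\<exists>n>N. g n = m" by blast
    qed
    have Sle: "r \<in> S \<Longrightarrow> r \<le> m" for r
    proof -
      assume "r \<in> S"
      then obtain N where N: "N > length x" "g N = r" unfolding S_def INFM_nat by blast
      have "N \<le> length (f N)" using flen[of N] by simp
      hence e: "map \<beta> [0..<N] = take N (f N)" by (rule mapb)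
      obtain w where w: "f N = x @ w" using fx by blast
      have "take N (f N) = x @ take (N - length x) w" using N(1) w by simp
      hence "rho (map \<beta> [0..<N]) \<in> R" using e unfolding R_def Reach_def by auto
      then show ?thesis using N(2) leM unfolding g_def by auto
    qed
    have finS: "finite S"
      by (rule finite_subset[of _ "rank ` UNIV"]) (auto simp: S_def g_def dest: INFM_E)
    have "Max S = m" using finS mS Sle by (intro Max_eqI) auto
    then show False using po odd unfolding parity_ok_def S_def by simp
  qed
  obtain w0 where w0: "rho (x @ [] @ w0) = q" using reach[OF qR] by blast
  define x0 where "x0 = x @ w0"
  obtain w1 where w1: "rho (x @ (w0 @ [False]) @ w1) = q" using reach[OF qR] by blast
  obtain w2 where w2: "rho (x @ (w0 @ [True]) @ w2) = q" using reach[OF qR] by blast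
  have rx0: "rho x0 = q" using w0 x0_def by simp
  have accl: "accepting_loop delta rank q (wd t x0 (d # w))" if "rho (x0 @ d # w) = q" for d w
  proof -
    have tgt: "target delta q (wd t x0 (d # w)) = q"
      using wd_target[of rho delta t, OF step, of x0 "d # w"] that rx0 by simp
    let ?A = "rank ` set (pstates delta (rho x0) (wd t x0 (d # w)))"
    have sub: "?A \<subseteq> rank ` R"
      using wd_set(1)[of rho delta t, OF step, of x0 "d#w"] Rall[of w0] unfolding x0_def Reach_def by blast
    have "m \<in> ?A" using wd_set(2)[of rho delta t, OF step, of x0 "d#w"] rx0 rq by auto
    hence "Max ?A = m" using sub leM
      by (intro Max_eqI) (auto intro: finite_subset[OF sub finR])
    then show ?thesis unfolding accepting_loop_def is_loop_def using tgt evm rx0 by simp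
  qed
  have b: "branching (wd t x0 (False # w1)) (wd t x0 (True # w2))"
    unfolding branching_def by (rule exI[of _ "[]"]) auto
  have tp: "target delta p (wd t u (v @ w0)) = q"
    using wd_target[of rho delta t, OF step, of u "v @ w0"] pu rx0 unfolding rho_def x0_def x_def by simp
  show ?thesis
    using tp b accl[of False w1] accl[of True w2] w1 w2 unfolding x0_def by fastforce
qed

end
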